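(* Fix $V_{\sf P}\ge 0$ and $\delta\in[0,1)$. There exists $p_0=p_0(\delta,V_{\sf P})\in(0,1]$ such that for every $p\in(0,p_0]$ (with $p<1$), the policy ${\sf APP}$ maximizes ${\sf Eng}(\pi)$ over all online policies $\pi$. Moreover, $$ {\sf Eng}({\sf APP})=\frac{1}{1-\delta}\cdot\frac{2e^{V_{\sf P}}}{1+2e^{V_{\sf P}}},\qquad {\sf Util}({\sf APP})=\frac{1}{1-\delta}\ln\!\left(1+2e^{V_{\sf P}}\right).$$
   Context: Model. Time $t=0,1,2,\dots$, discount factor $\delta\in[0,1)$. There are two item types, popular ${\sf P}$ and niche ${\sf N}$, each with infinitely many items. At each time $t$ the platform recommends a set $\pi_t$ of two items, each of which is a fresh (never previously recommended) item of a chosen type; so effectively it chooses one of the type pairs $\{{\sf P},{\sf P}\}$, $\{{\sf P},{\sf N}\}$, $\{{\sf N},{\sf N}\}$. The user's utility for an item $i$ of type $\tau(i)$ is $u_i=V_{\tau(i)}+\epsilon_i$, and for the outside option $\emptyset$ it is $u_\emptyset=\epsilon_\emptyset$ (base utility $0$). All noise terms $\epsilon$ (across items, the outside option, and time) are i.i.d. Gumbel with scale $1$ and mean $0$, i.e. CDF $x\mapsto\exp(-\exp(-(x+\gamma)))$ with $\gamma$ the Euler–Mascheroni constant. At each time the user chooses $c_t=\arg\max_{j\in\pi_t\cup\{\emptyset\}}u_j$. The popular base utility $V_{\sf P}$ is a known constant. The niche base utility $V_{\sf N}$ is a random variable drawn once (for the user, fixed over time, independent of the noise) with $\mathbb P(V_{\sf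 N}=(1-p)/p)=p$ and $\mathbb P(V_{\sf N}=-1)=1-p$, where $p\in(0,1)$; this distribution is known to the platform but the realization is not. An online policy is a (possibly randomized) rule choosing $\pi_t$ based only on the history $\{(\pi_s,c_s)\}_{s<t}$. For a policy $\pi$, ${\sf Eng}(\pi)=\sum_{t\ge0}\delta^t\,\mathbb P(c_t\ne\emptyset)$ and ${\sf Util}(\pi)=\sum_{t\ge0}\delta^t\,\mathbb E[\max_{j\in\pi_t\cup\{\emptyset\}}u_j]$, where expectations are also over $V_{\sf N}$. The Always Popular Policy ${\sf APP}$ recommends two popular items at every time $t$. *)

theory Defs
  imports "HOL-Probability.Probability"
begin

text \<open>Gumbel noise with scale 1 and mean 0: CDF  x \<mapsto> exp(-exp(-(x+gamma))),
  given here by its density (the derivative of that CDF) w.r.t. Lebesgue measure.\<close>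
definition gumbel_density :: "real \<Rightarrow> real" where
  "gumbel_density x = exp (-(x + euler_mascheroni)) * exp (- exp (-(x + euler_mascheroni)))"

definition gumbel :: "real measure" where
  "gumbel = density lborel (\<lambda>x. ennreal (gumbel_density x))"

text \<open>Independent noise for one time step: (eps_outside, (eps_slot1, eps_slot2)).\<close>
definition noise3 :: "(real \<times> real \<times> real) measure" where
  "noise3 = gumbel \<Otimes>\<^sub>M (gumbel \<Otimes>\<^sub>M gumbel)"

text \<open>Item types and the three possible recommended type pairs (two fresh items).\<close>
datatype itype = Pop | Nic
datatype action = PP | PN | NN
datatype outcome = Out | First | Second

fun slot1 :: "action \<Rightarrow> itype" where
  "slot1 PP = Pop" | "slot1 PN = Pop" | "slot1 NN = Nic"
fun slot2 :: "action \<Rightarrow> itype" where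
  "slot2 PP = Pop" | "slot2 PN = Nic" | "slot2 NN = Nic"

fun base :: "real \<Rightarrow> real \<Rightarrow> itype \<Rightarrow> real" where
  "base VP vN Pop = VP" | "base VP vN Nic = vN"

definition u_out :: "real \<times> real \<times> real \<Rightarrow> real" where
  "u_out e = fst e"
definition u_1 :: "real \<Rightarrow> real \<Rightarrow> action \<Rightarrow> real \<times> real \<times> real \<Rightarrow> real" where
  "u_1 VP vN a e = base VP vN (slot1 a) + fst (snd e)"
definition u_2 :: "real \<Rightarrow> real \<Rightarrow> action \<Rightarrow> real \<times> real \<times> real \<Rightarrow> real" where
  "u_2 VP vN a e = base VP vN (slot2 a) + snd (snd e)"

text \<open>The user's choice: argmax of the utilities (ties, a null event, broken arbitrarily).\<close>
definition choice :: "real \<Rightarrow> real \<Rightarrow> action \<Rightarrow> real \<times> real \<times> real \<Rightarrow> outcome" where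
  "choice VP vN a e =
     (if u_out e \<ge> u_1 VP vN a e \<and> u_out e \<ge> u_2 VP vN a e then Out
      else if u_1 VP vN a e \<ge> u_2 VP vN a e then First else Second)"

definition outcome_prob :: "real \<Rightarrow> real \<Rightarrow> action \<Rightarrow> outcome \<Rightarrow> real" where
  "outcome_prob VP vN a c = measure noise3 {e \<in> space noise3. choice VP vN a e = c}"

definition engage_prob :: "real \<Rightarrow> real \<Rightarrow> action \<Rightarrow> real" where
  "engage_prob VP vN a = measure noise3 {e \<in> space noise3. choice VP vN a e \<noteq> Out}"

definition exp_max_util :: "real \<Rightarrow> real \<Rightarrow> action \<Rightarrow> real" where
  "exp_max_util VP vN a =
     integral\<^sup>L noise3 (\<lambda>e. max (u_out e) (max (u_1 VP vN a e) (u_2 VP vN a e)))"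

text \<open>Online (possibly randomized) policies: a history is the list of past
  (recommended pair, observed choice); the policy maps it to a distribution over actions.\<close>
type_synonym history = "(action \<times> outcome) list"
type_synonym policy = "history \<Rightarrow> action pmf"

definition all_actions :: "action set" where
  "all_actions = {PP, PN, NN}"
definition all_steps :: "(action \<times> outcome) set" where
  "all_steps = all_actions \<times> {Out, First, Second}"

definition histories :: "nat \<Rightarrow> history set" where
  "histories t = {h. set h \<subseteq> all_steps \<and> length h = t}"

definition hist_prob :: "real \<Rightarrow> policy \<Rightarrow> real \<Rightarrow> history \<Rightarrow> real" where
  "hist_prob VP pol vN h =
     (\<Prod>s<length h. pmf (pol (take s h)) (fst (h ! s)) * outcome_prob VP vN (fst (h ! s)) (snd (h ! s)))"

text \<open>Prior on V_N: (1-p)/p with probability p and -1 with probability 1-p.\<close>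
definition vN_high :: "real \<Rightarrow> real" where "vN_high p = (1 - p) / p"
definition vN_low :: real where "vN_low = -1"

definition cond_expect :: "real \<Rightarrow> policy \<Rightarrow> nat \<Rightarrow> (action \<Rightarrow> real \<Rightarrow> real) \<Rightarrow> real \<Rightarrow> real" where
  "cond_expect VP pol t g vN =
     (\<Sum>h \<in> histories t. hist_prob VP pol vN h *
        (\<Sum>a \<in> all_actions. pmf (pol h) a * g a vN))"

definition step_expect :: "real \<Rightarrow> real \<Rightarrow> policy \<Rightarrow> nat \<Rightarrow> (action \<Rightarrow> real \<Rightarrow> real) \<Rightarrow> real" where
  "step_expect VP p pol t g =
     p * cond_expect VP pol t g (vN_high p) + (1 - p) * cond_expect VP pol t g vN_low"

definition Eng :: "real \<Rightarrow> real \<Rightarrow> real \<Rightarrow> policy \<Rightarrow> real" where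
  "Eng VP \<delta> p pol = (\<Sum>t. \<delta> ^ t * step_expect VP p pol t (\<lambda>a vN. engage_prob VP vN a))"

definition Util :: "real \<Rightarrow> real \<Rightarrow> real \<Rightarrow> policy \<Rightarrow> real" where
  "Util VP \<delta> p pol = (\<Sum>t. \<delta> ^ t * step_expect VP p pol t (\<lambda>a vN. exp_max_util VP vN a))"

definition APP :: policy where
  "APP = (\<lambda>h. return_pmf PP)"

end

theory Submission
  imports Defs
begin


lemma Gamma_int_pos:
  assumes "x > (0::real)"
  shows "((\<lambda>t. t powr (x - 1) / exp t) has_integral Gamma x) {0<..}"
proof -
  have "((\<lambda>t. t powr (x - 1) / exp t) has_integral Gamma x) {0..}"
    by (rule Gamma_integral_real) fact
  hence "((\<lambda>t. if t \<in> {0<..} then t powr (x - 1) / exp t else 0) has_integral Gamma x) {0..}"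
    by (rule has_integral_spike [of "{0}", rotated 2]) auto
  also have "?this = ?thesis"
    by (subst has_integral_restrict) auto
  finally show ?thesis .
qed

lemma deriv_seq:
  fixes f :: "real \<Rightarrow> real"
  assumes "(f has_real_derivative D) (at x)"
  shows "(\<lambda>k. (f (x + 1 / real (Suc k)) - f x) / (1 / real (Suc k))) \<longlonglongrightarrow> D"
proof -
  have lim: "((\<lambda>y. (f y - f x) / (y - x)) \<longlongrightarrow> D) (at x)"
    using assms by (simp add: has_field_derivative_iff)
  have s: "(\<lambda>k. x + 1 / real (Suc k)) \<longlonglongrightarrow> x"
    using tendsto_add[OF tendsto_const[of x] LIMSEQ_inverse_real_of_nat]
    by (simp add: inverse_eq_divide)
  have "filterlim (\<lambda>k. x + 1 / real (Suc k)) (at x) sequentially"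
    unfolding filterlim_at using s by auto
  from filterlim_compose[OF lim this] show ?thesis by (simp add: o_def)
qed


lemma exp_minus_one_bound:
  fixes u :: real
  shows "\<bar>exp u - 1\<bar> \<le> \<bar>u\<bar> * (1 + exp u)"
proof (cases "u \<ge> 0")
  case True
  have "1 - u \<le> exp (-u)" using exp_ge_add_one_self[of "-u"] by simp
  hence "exp u * (1 - u) \<le> exp u * exp (-u)" by (intro mult_left_mono) auto
  hence "exp u - u * exp u \<le> 1" by (simp add: exp_minus field_simps)
  moreover have "exp u \<ge> 1" using True by simp
  ultimately show ?thesis using True by (simp add: algebra_simps)
next
  case False
  have "1 + u \<le> exp u" using exp_ge_add_one_self[of u] by simp
  moreover have "exp u \<le> 1" using False by simp
  moreover have "u * exp u \<le> 0" using False by (simp add: mult_nonpos_nonneg)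
  moreover have "\<bar>u\<bar> * (1 + exp u) = -u - u * exp u" using False by (simp add: algebra_simps)
  moreover have "\<bar>exp u - 1\<bar> = 1 - exp u" using \<open>exp u \<le> 1\<close> by simp
  ultimately show ?thesis by linarith
qed

lemma abs_ln_bound:
  assumes "t > (0::real)"
  shows "\<bar>ln t\<bar> \<le> 2 * t powr (-1/2) + t"
proof (cases "t \<ge> 1")
  case True
  have "ln t \<le> t - 1" using assms by (rule ln_le_minus_one)
  moreover have "ln t \<ge> 0" using True by simp
  moreover have p: "t powr (-1/2) \<ge> 0" by simp
  ultimately have "ln t \<le> 2 * t powr (-1/2) + t" by linarith
  thus ?thesis using \<open>ln t \<ge> 0\<close> by simp
next
  case False
  have "ln (t powr (-1/2)) \<le> t powr (-1/2) - 1" using assms by (intro ln_le_minus_one) simp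
  hence "- ln t / 2 \<le> t powr (-1/2) - 1" using assms by (simp add: ln_powr)
  moreover have "ln t \<le> 0" using False assms by simp
  ultimately show ?thesis using assms by simp
qed

lemma powr_le_one_plus:
  assumes "t > (0::real)" "0 \<le> h" "h \<le> 1"
  shows "t powr h \<le> 1 + t"
proof (cases "t \<le> 1")
  case True
  hence "t powr h \<le> 1 powr h" using assms by (intro powr_mono2) auto
  thus ?thesis using assms by simp
next
  case False
  hence "t powr h \<le> t powr 1" using assms by (intro powr_mono) auto
  thus ?thesis using assms by simp
qed

definition Hdom :: "real \<Rightarrow> real" where
  "Hdom t = (2 * t powr (-1/2) + t) * (2 + t) / exp t"

lemma Hdom_integrable: "Hdom integrable_on {0<..}"
proof -
  have i: "(\<lambda>t. t powr (a - 1) / exp t) integrable_on {0<..}" if "a > 0" for a :: real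
    using Gamma_int_pos[OF that] by blast
  have "(\<lambda>t::real. 4 * (t powr (1/2 - 1) / exp t) + 2 * (t powr (3/2 - 1) / exp t)
        + 2 * (t powr (2 - 1) / exp t) + (t powr (3 - 1) / exp t)) integrable_on {0<..}"
    by (intro integrable_add integrable_on_mult_right i) auto
  moreover have "4 * (t powr (1/2 - 1) / exp t) + 2 * (t powr (3/2 - 1) / exp t)
        + 2 * (t powr (2 - 1) / exp t) + (t powr (3 - 1) / exp t) = Hdom t" if "t \<in> {0<..}" for t
  proof -
    have t: "t > 0" using that by simp
    have "t powr (3/2 - 1) = t powr (-1/2 + 1)" by simp
    also have "\<dots> = t powr (-1/2) * t powr 1" by (rule powr_add)
    also have "\<dots> = t powr (-1/2) * t" using t by simp
    finally have a: "t powr (3/2 - 1) = t powr (-1/2) * t" .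
    have b: "t powr (1/2 - 1) = t powr (-1/2)" by simp
    have c: "t powr (2 - 1) = t" using t by simp
    have d: "t powr (3 - 1) = t * t" using t by (simp add: powr_add[symmetric] powr_numeral power2_eq_square)
    show ?thesis unfolding Hdom_def a b c d by (simp add: field_simps)
  qed
  ultimately show ?thesis using integrable_eq by (metis (no_types, lifting))
qed


lemma f_bound:
  assumes t: "t > (0::real)" and h: "0 < h" "h \<le> 1"
  shows "\<bar>(t powr h - 1) / h / exp t\<bar> \<le> Hdom t"
proof -
  have "t powr h = exp (h * ln t)" using t by (simp add: powr_def)
  hence "\<bar>t powr h - 1\<bar> \<le> \<bar>h * ln t\<bar> * (1 + t powr h)"
    using exp_minus_one_bound[of "h * ln t"] by simp
  also have "\<dots> \<le> \<bar>h * ln t\<bar> * (1 + (1 + t))"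
    using powr_le_one_plus[OF t, of h] h by (intro mult_left_mono) auto
  finally have "\<bar>t powr h - 1\<bar> / h \<le> \<bar>ln t\<bar> * (2 + t)"
    using h by (simp add: abs_mult field_simps)
  also have "\<dots> \<le> (2 * t powr (-1/2) + t) * (2 + t)"
    using abs_ln_bound[OF t] t by (intro mult_right_mono) auto
  finally have *: "\<bar>t powr h - 1\<bar> / h \<le> (2 * t powr (-1/2) + t) * (2 + t)" .
  have "\<bar>(t powr h - 1) / h / exp t\<bar> = (\<bar>t powr h - 1\<bar> / h) / exp t"
    using h by (simp add: abs_divide)
  also have "\<dots> \<le> (2 * t powr (-1/2) + t) * (2 + t) / exp t"
    using * by (intro divide_right_mono) auto
  finally show ?thesis unfolding Hdom_def .
qed

lemma ln_exp_has_integral: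
  "((\<lambda>t::real. ln t / exp t) has_integral (- euler_mascheroni)) {0<..}"
proof -
  define hk where "hk k = 1 / real (Suc k)" for k
  have hk: "0 < hk k" "hk k \<le> 1" for k unfolding hk_def by (auto simp: field_simps)
  define f where "f k t = (t powr hk k - 1) / hk k / exp t" for k t
  define y where "y k = 1 / hk k * (Gamma (1 + hk k) - Gamma 1)" for k
  have fi: "(f k has_integral y k) {0<..}" for k
  proof -
    have a: "((\<lambda>t::real. t powr (1 + hk k - 1) / exp t) has_integral Gamma (1 + hk k)) {0<..}"
      using hk[of k] by (intro Gamma_int_pos) auto
    have b: "((\<lambda>t::real. t powr (1 - 1) / exp t) has_integral Gamma 1) {0<..}"
      using Gamma_int_pos[of "1::real"] by simp
    have "((\<lambda>t. (1 / hk k) * (t powr (1 + hk k - 1) / exp t - t powr (1 - 1) / exp t))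
           has_integral (1 / hk k) * (Gamma (1 + hk k) - Gamma 1)) {0<..}"
      by (intro has_integral_mult_right has_integral_diff a b)
    thus ?thesis unfolding f_def y_def
      by (rule has_integral_eq[rotated]) (simp add: field_simps)
  qed
  have G: "(Gamma has_real_derivative Gamma 1 * Digamma 1) (at (1::real))"
    by (rule has_field_derivative_Gamma) (simp add: nonpos_Ints_def)
  have ylim: "y \<longlonglongrightarrow> - euler_mascheroni"
    using deriv_seq[OF G] unfolding y_def hk_def by (simp add: mult.commute)
  have conv: "(\<lambda>k. f k t) \<longlonglongrightarrow> ln t / exp t" if "t \<in> {0<..}" for t
  proof -
    have t: "t > 0" using that by simp
    have D: "((\<lambda>h. exp (h * ln t)) has_real_derivative exp (0 * ln t) * ln t) (at 0)"
      by (auto intro!: derivative_eq_intros)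
    have "(\<lambda>k. (exp ((0 + hk k) * ln t) - exp (0 * ln t)) / hk k) \<longlonglongrightarrow> ln t"
      using deriv_seq[OF D] unfolding hk_def by simp
    hence "(\<lambda>k. (exp ((0 + hk k) * ln t) - exp (0 * ln t)) / hk k / exp t) \<longlonglongrightarrow> ln t / exp t"
      by (intro tendsto_divide tendsto_const) auto
    moreover have "(exp ((0 + hk k) * ln t) - exp (0 * ln t)) / hk k / exp t = f k t" for k
      using t unfolding f_def by (simp add: powr_def)
    ultimately show ?thesis by simp
  qed
  have bound: "\<forall>x\<in>{0<..}. norm (f k x) \<le> Hdom x" for k
    using f_bound[OF _ hk] unfolding f_def real_norm_def by blast
  show ?thesis
    by (rule has_integral_dominated_convergence[OF fi Hdom_integrable bound _ ylim])
       (use conv in auto)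
qed

lemma ln_exp_abs_integrable:
  "(\<lambda>t::real. ln t / exp t) absolutely_integrable_on {0<..}"
proof (rule absolutely_integrable_integrable_bound[OF _ _ Hdom_integrable])
  show "(\<lambda>t::real. ln t / exp t) integrable_on {0<..}" using ln_exp_has_integral by blast
next
  fix t :: real assume "t \<in> {0<..}"
  hence t: "t > 0" by simp
  have "\<bar>ln t\<bar> \<le> (2 * t powr (-1/2) + t) * 1" using abs_ln_bound[OF t] by simp
  also have "\<dots> \<le> (2 * t powr (-1/2) + t) * (2 + t)" using t by (intro mult_left_mono) auto
  finally show "norm (ln t / exp t) \<le> Hdom t" unfolding Hdom_def
    by (simp add: abs_divide divide_right_mono)
qed


abbreviation gam :: real where "gam \<equiv> euler_mascheroni"

definition gF :: "real \<Rightarrow> real \<Rightarrow> real" where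
  "gF k x = exp (-(1+k) * exp (-(x + gam))) / (1 + k)"

definition gI :: "real \<Rightarrow> real \<Rightarrow> real" where
  "gI k x = gumbel_density x * exp (-k * exp (-(x + gam)))"

lemma gI_nonneg: "0 \<le> gI k x" unfolding gI_def gumbel_density_def by simp

lemma gI_cont: "isCont (gI k) x" unfolding gI_def gumbel_density_def
  by (intro continuous_intros)

lemma gI_meas[measurable]: "gI k \<in> borel_measurable borel"
  by (intro borel_measurable_continuous_onI continuous_at_imp_continuous_on ballI gI_cont)

lemma gF_deriv:
  assumes "k \<ge> 0"
  shows "(gF k has_real_derivative gI k x) (at x)"
proof -
  have "(gF k has_real_derivative
     exp (-(1+k) * exp (-(x + gam))) * (-(1+k) * (exp (-(x + gam)) * (- (1 + 0))))/ (1 + k)) (at x)"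
    unfolding gF_def using assms by (auto intro!: derivative_eq_intros)
  moreover have "exp (-(1+k) * exp (-(x + gam))) * (-(1+k) * (exp (-(x + gam)) * (- (1 + 0))))/ (1 + k)
      = gI k x"
    using assms unfolding gI_def gumbel_density_def
    by (simp add: field_simps exp_add[symmetric])
  ultimately show ?thesis by simp
qed

lemma gF_bot:
  assumes "k \<ge> 0"
  shows "(gF k \<longlongrightarrow> 0) at_bot"
proof -
  have c: "1 + k > 0" using assms by simp
  have "filterlim (\<lambda>x::real. exp (-(x + gam))) at_top at_bot"
    by real_asymp
  hence "filterlim (\<lambda>x::real. (1+k) * exp (-(x + gam))) at_top at_bot"
    using filterlim_tendsto_pos_mult_at_top[OF tendsto_const c] by blast
  moreover have "((\<lambda>y::real. exp (- y)) \<longlongrightarrow> 0) at_top" by real_asymp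
  ultimately have "((\<lambda>x::real. exp (- ((1+k) * exp (-(x + gam))))) \<longlongrightarrow> 0) at_bot"
    using filterlim_compose by blast
  hence "((\<lambda>x::real. exp (- ((1+k) * exp (-(x + gam)))) / (1 + k)) \<longlongrightarrow> 0 / (1 + k)) at_bot"
    by (intro tendsto_divide tendsto_const) (use c in auto)
  moreover have "exp (- ((1+k) * exp (-(x + gam)))) / (1 + k) = gF k x" for x
    unfolding gF_def by (simp add: algebra_simps)
  ultimately show ?thesis by simp
qed

lemma gF_top:
  assumes "k \<ge> 0"
  shows "(gF k \<longlongrightarrow> 1 / (1 + k)) at_top"
proof -
  have "((\<lambda>x::real. exp (-(x + gam))) \<longlongrightarrow> 0) at_top"
    by real_asymp
  hence "((\<lambda>x::real. exp (-(1+k) * exp (-(x + gam))) / (1 + k)) \<longlongrightarrow> exp (-(1+k) * 0) / (1 + k)) at_top"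
    by (intro tendsto_intros) (use assms in auto)
  thus ?thesis unfolding gF_def by simp
qed

lemma gI_FTC:
  assumes k: "k \<ge> 0" and ab: "-\<infinity> < c"
    and B: "((gF k \<circ> real_of_ereal) \<longlongrightarrow> B) (at_left c)"
  shows "(\<integral>\<^sup>+x. ennreal (gI k x) * indicator (einterval (-\<infinity>) c) x \<partial>lborel) = ennreal B"
proof -
  have A: "((gF k \<circ> real_of_ereal) \<longlongrightarrow> 0) (at_right (-\<infinity>))"
    unfolding ereal_tendsto_simps1 by (rule gF_bot[OF k])
  note ftc = interval_integral_FTC_nonneg[OF ab gF_deriv[OF k] gI_cont _ A B]
  have si: "set_integrable lborel (einterval (-\<infinity>) c) (gI k)"
    using ftc(1) gI_nonneg by auto
  have eq: "(LBINT x=-\<infinity>..c. gI k x) = B"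
    using ftc(2) gI_nonneg by auto
  have "(\<integral>\<^sup>+x. ennreal (gI k x) * indicator (einterval (-\<infinity>) c) x \<partial>lborel)
      = (\<integral>\<^sup>+x. ennreal (indicator (einterval (-\<infinity>) c) x *\<^sub>R gI k x) \<partial>lborel)"
    by (intro nn_integral_cong) (auto split: split_indicator)
  also have "\<dots> = ennreal (\<integral>x. indicator (einterval (-\<infinity>) c) x *\<^sub>R gI k x \<partial>lborel)"
    using si unfolding set_integrable_def
    by (intro nn_integral_eq_integral) (auto simp: gI_nonneg split: split_indicator)
  also have "(\<integral>x. indicator (einterval (-\<infinity>) c) x *\<^sub>R gI k x \<partial>lborel) = B"
    using eq ab unfolding interval_lebesgue_integral_def set_lebesgue_integral_def by simp
  finally show ?thesis .
qed

lemma gI_nn_UNIV: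
  assumes k: "k \<ge> 0"
  shows "(\<integral>\<^sup>+x. ennreal (gI k x) \<partial>lborel) = ennreal (1 / (1 + k))"
proof -
  have B: "((gF k \<circ> real_of_ereal) \<longlongrightarrow> 1 / (1 + k)) (at_left \<infinity>)"
    unfolding ereal_tendsto_simps1 by (rule gF_top[OF k])
  show ?thesis using gI_FTC[OF k _ B] by simp
qed

lemma gI_nn_below:
  assumes k: "k \<ge> 0"
  shows "(\<integral>\<^sup>+x. ennreal (gI k x) * indicator {..<b} x \<partial>lborel) = ennreal (gF k b)"
proof -
  have "isCont (gF k) b" using gF_deriv[OF k] DERIV_isCont by blast
  hence "(gF k \<longlongrightarrow> gF k b) (at_left b)"
    by (simp add: filterlim_at_split isCont_def)
  hence B: "((gF k \<circ> real_of_ereal) \<longlongrightarrow> gF k b) (at_left (ereal b))"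
    unfolding ereal_tendsto_simps1 .
  show ?thesis using gI_FTC[OF k _ B] by simp
qed


lemma gdens_gI: "gumbel_density = gI 0"
  by (auto simp: gI_def)

lemma gdens_meas[measurable]: "gumbel_density \<in> borel_measurable borel"
  by (simp add: gdens_gI)

lemma sets_gumbel[simp, measurable_cong]: "sets gumbel = sets borel"
  by (simp add: gumbel_def)

lemma space_gumbel[simp]: "space gumbel = UNIV"
  by (simp add: gumbel_def)

lemma emeasure_gumbel:
  assumes "A \<in> sets borel"
  shows "emeasure gumbel A = (\<integral>\<^sup>+x. ennreal (gumbel_density x) * indicator A x \<partial>lborel)"
  unfolding gumbel_def using assms by (subst emeasure_density) auto

lemma prob_space_gumbel: "prob_space gumbel"
proof
  have "emeasure gumbel UNIV = (\<integral>\<^sup>+x. ennreal (gI 0 x) \<partial>lborel)"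
    by (subst emeasure_gumbel) (auto simp: gdens_gI)
  also have "\<dots> = 1" using gI_nn_UNIV[of 0] by simp
  finally show "emeasure gumbel (space gumbel) = 1" by simp
qed

interpretation G: prob_space gumbel by (rule prob_space_gumbel)

definition Fg :: "real \<Rightarrow> real" where "Fg x = exp (- exp (-(x + gam)))"

lemma Fg_meas[measurable]: "Fg \<in> borel_measurable borel"
  unfolding Fg_def[abs_def] by measurable

lemma gF0: "gF 0 x = Fg x" by (simp add: gF_def Fg_def)

lemma emeasure_gumbel_lessThan: "emeasure gumbel {..<b} = ennreal (Fg b)"
proof -
  have "emeasure gumbel {..<b} = (\<integral>\<^sup>+x. ennreal (gI 0 x) * indicator {..<b} x \<partial>lborel)"
    by (subst emeasure_gumbel) (auto simp: gdens_gI)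
  also have "\<dots> = ennreal (Fg b)" using gI_nn_below[of 0 b] by (simp add: gF0)
  finally show ?thesis .
qed

lemma emeasure_gumbel_atMost: "emeasure gumbel {..b} = ennreal (Fg b)"
proof -
  have "emeasure gumbel {..b} = (\<integral>\<^sup>+x. ennreal (gumbel_density x) * indicator {..b} x \<partial>lborel)"
    by (subst emeasure_gumbel) auto
  also have "\<dots> = (\<integral>\<^sup>+x. ennreal (gumbel_density x) * indicator {..<b} x \<partial>lborel)"
    by (intro nn_integral_cong_AE) (use AE_lborel_singleton[of b] in \<open>auto elim!: eventually_mono split: split_indicator\<close>)
  also have "\<dots> = emeasure gumbel {..<b}"
    by (subst emeasure_gumbel) auto
  finally show ?thesis using emeasure_gumbel_lessThan by simp
qed

lemma measure_gumbel_atMost: "measure gumbel {..b} = Fg b"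
  using emeasure_gumbel_atMost by (simp add: measure_def Fg_def)

lemma measure_gumbel_lessThan: "measure gumbel {..<b} = Fg b"
  using emeasure_gumbel_lessThan by (simp add: measure_def Fg_def)

lemma prob_space_noise3: "prob_space noise3"
  unfolding noise3_def
  by (intro prob_space_pair prob_space_gumbel)

interpretation N3: prob_space noise3 by (rule prob_space_noise3)

lemma sets_noise3[measurable_cong]: "sets noise3 = sets (borel \<Otimes>\<^sub>M (borel \<Otimes>\<^sub>M borel))"
  unfolding noise3_def by (intro sets_pair_measure_cong) auto

lemma space_noise3: "space noise3 = UNIV"
  unfolding noise3_def by (simp add: space_pair_measure)


interpretation GG: pair_sigma_finite gumbel gumbel
  by (intro pair_sigma_finite.intro G.sigma_finite_measure_axioms)

lemma Fg_prod: "Fg (x - a) * Fg (x - b) = exp (- (exp a + exp b) * exp (-(x + gam)))"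
proof -
  have "exp (-(x - a + gam)) = exp a * exp (-(x + gam))" by (simp add: exp_add[symmetric])
  moreover have "exp (-(x - b + gam)) = exp b * exp (-(x + gam))" by (simp add: exp_add[symmetric])
  ultimately show ?thesis unfolding Fg_def by (simp add: exp_add[symmetric] algebra_simps)
qed

lemma emeasure_out:
  "emeasure noise3 {e. a + fst (snd e) \<le> fst e \<and> b + snd (snd e) \<le> fst e}
     = ennreal (1 / (1 + (exp a + exp b)))"
proof -
  let ?X = "{e::real\<times>real\<times>real. a + fst (snd e) \<le> fst e \<and> b + snd (snd e) \<le> fst e}"
  have X0: "{e \<in> space (gumbel \<Otimes>\<^sub>M (gumbel \<Otimes>\<^sub>M gumbel)). a + fst (snd e) \<le> fst e \<and> b + snd (snd e) \<le> fst e}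
     \<in> sets (gumbel \<Otimes>\<^sub>M (gumbel \<Otimes>\<^sub>M gumbel))"
    by measurable
  have X: "?X \<in> sets (gumbel \<Otimes>\<^sub>M (gumbel \<Otimes>\<^sub>M gumbel))"
    using X0 by (simp add: space_pair_measure)
  have "emeasure noise3 ?X = (\<integral>\<^sup>+x. emeasure (gumbel \<Otimes>\<^sub>M gumbel) (Pair x -` ?X) \<partial>gumbel)"
    unfolding noise3_def by (rule GG.emeasure_pair_measure_alt[OF X])
  also have "\<dots> = (\<integral>\<^sup>+x. ennreal (Fg (x - a) * Fg (x - b)) \<partial>gumbel)"
  proof (intro nn_integral_cong)
    fix x
    have "Pair x -` ?X = {..x - a} \<times> {..x - b}" by auto
    hence "emeasure (gumbel \<Otimes>\<^sub>M gumbel) (Pair x -` ?X) = emeasure gumbel {..x-a} * emeasure gumbel {..x-b}"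
      by (simp add: G.emeasure_pair_measure_Times)
    thus "emeasure (gumbel \<Otimes>\<^sub>M gumbel) (Pair x -` ?X) = ennreal (Fg (x - a) * Fg (x - b))"
      by (simp add: emeasure_gumbel_atMost ennreal_mult Fg_def)
  qed
  also have "\<dots> = (\<integral>\<^sup>+x. ennreal (gumbel_density x) * ennreal (Fg (x - a) * Fg (x - b)) \<partial>lborel)"
    unfolding gumbel_def by (subst nn_integral_density) auto
  also have "\<dots> = (\<integral>\<^sup>+x. ennreal (gI (exp a + exp b) x) \<partial>lborel)"
    by (intro nn_integral_cong) (simp add: Fg_prod gI_def ennreal_mult[symmetric] gumbel_density_def)
  also have "\<dots> = ennreal (1 / (1 + (exp a + exp b)))"
    by (intro gI_nn_UNIV) (simp add: add_nonneg_nonneg)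
  finally show ?thesis .
qed


lemma choice_meas[measurable]: "choice VP vN a \<in> measurable noise3 (count_space UNIV)"
  unfolding choice_def[abs_def] u_out_def u_1_def u_2_def by measurable

lemma choice_set_meas[measurable]: "{e \<in> space noise3. choice VP vN a e = c} \<in> sets noise3"
  by measurable

lemma outcome_prob_Out:
  "outcome_prob VP vN a Out = 1 / (1 + (exp (base VP vN (slot1 a)) + exp (base VP vN (slot2 a))))"
proof -
  have "{e \<in> space noise3. choice VP vN a e = Out} =
     {e. base VP vN (slot1 a) + fst (snd e) \<le> fst e \<and> base VP vN (slot2 a) + snd (snd e) \<le> fst e}"
    by (auto simp: choice_def u_out_def u_1_def u_2_def space_noise3)
  thus ?thesis unfolding outcome_prob_def measure_def
    by (simp add: emeasure_out)
qed

lemma engage_prob_eq: "engage_prob VP vN a = 1 - outcome_prob VP vN a Out"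
proof -
  have "{e \<in> space noise3. choice VP vN a e \<noteq> Out} = space noise3 - {e \<in> space noise3. choice VP vN a e = Out}"
    by auto
  thus ?thesis unfolding engage_prob_def outcome_prob_def
    using N3.prob_compl[OF choice_set_meas[of VP vN a Out]] by simp
qed

lemma engage_prob_formula:
  "engage_prob VP vN a = (exp (base VP vN (slot1 a)) + exp (base VP vN (slot2 a)))
      / (1 + (exp (base VP vN (slot1 a)) + exp (base VP vN (slot2 a))))"
proof -
  have "1 + (exp (base VP vN (slot1 a)) + exp (base VP vN (slot2 a))) > 0"
    by (simp add: add_pos_pos)
  thus ?thesis unfolding engage_prob_eq outcome_prob_Out by (simp add: field_simps)
qed

lemma outcome_sum: "(\<Sum>c\<in>{Out, First, Second}. outcome_prob VP vN a c) = 1"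
proof -
  let ?S = "\<lambda>c. {e \<in> space noise3. choice VP vN a e = c}"
  have "{e \<in> space noise3. choice VP vN a e \<noteq> Out} = ?S First \<union> ?S Second"
    by (auto intro: outcome.exhaust)
  hence "engage_prob VP vN a = outcome_prob VP vN a First + outcome_prob VP vN a Second"
    unfolding engage_prob_def outcome_prob_def
    by (simp add: N3.finite_measure_Union[OF choice_set_meas choice_set_meas] disjoint_iff)
  thus ?thesis using engage_prob_eq[of VP vN a] by simp
qed

lemma outcome_prob_nonneg: "0 \<le> outcome_prob VP vN a c"
  by (simp add: outcome_prob_def)

lemma outcome_prob_PP: "outcome_prob VP vN PP c = outcome_prob VP vN' PP c"
  by (simp add: outcome_prob_def choice_def u_1_def u_2_def)


definition Texp :: "real measure" where "Texp = density lborel (erlang_density 0 1)"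

lemma lnexp_lborel0:
  "integrable lborel (\<lambda>x::real. indicator {0<..} x *\<^sub>R (ln x / exp x))"
  "(\<integral>x. indicator {0<..} x *\<^sub>R (ln x / exp x) \<partial>lborel) = - gam"
proof -
  have m: "(\<lambda>x::real. indicator {0<..} x *\<^sub>R (ln x / exp x)) \<in> borel_measurable lborel"
    by measurable
  have "integrable lebesgue (\<lambda>x::real. indicator {0<..} x *\<^sub>R (ln x / exp x))"
    using ln_exp_abs_integrable unfolding set_integrable_def .
  thus "integrable lborel (\<lambda>x::real. indicator {0<..} x *\<^sub>R (ln x / exp x))"
    by (rule iffD1[OF integrable_completion[OF m]])
  have "(LINT x:{0<..} | lebesgue. ln x / exp x) = integral {0<..} (\<lambda>x::real. ln x / exp x)"
    by (rule set_lebesgue_integral_eq_integral(2)[OF ln_exp_abs_integrable])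
  also have "\<dots> = - gam" using ln_exp_has_integral by (rule integral_unique)
  finally have "(\<integral>x. indicator {0<..} (x::real) *\<^sub>R (ln x / exp x) \<partial>lebesgue) = - gam"
    unfolding set_lebesgue_integral_def .
  thus "(\<integral>x. indicator {0<..} (x::real) *\<^sub>R (ln x / exp x) \<partial>lborel) = - gam"
    by (rule trans[OF integral_completion[OF m, symmetric]])
qed

lemma lnexp_lborel:
  "integrable lborel (\<lambda>x::real. indicator {0<..} x * ln x / exp x)"
  "(\<integral>x. indicator {0<..} (x::real) * ln x / exp x \<partial>lborel) = - gam"
proof -
  have e: "(\<lambda>x::real. indicator {0<..} x *\<^sub>R (ln x / exp x)) = (\<lambda>x. indicator {0<..} x * ln x / exp x)"
    by (simp add: fun_eq_iff)
  show "integrable lborel (\<lambda>x::real. indicator {0<..} x * ln x / exp x)"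
    using lnexp_lborel0(1) by (simp only: e)
  show "(\<integral>x. indicator {0<..} (x::real) * ln x / exp x \<partial>lborel) = - gam"
    using lnexp_lborel0(2) by (simp only: e)
qed

lemma erl_ln: "erlang_density 0 1 x * ln x = indicator {0<..} x * ln x / exp x"
  by (auto simp: erlang_density_def exp_minus field_simps split: split_indicator)

lemma Texp_ln: "integrable Texp ln" "(\<integral>x. ln x \<partial>Texp) = - gam"
proof -
  have nn: "AE x in lborel. 0 \<le> erlang_density 0 1 x" by simp
  show "integrable Texp ln" unfolding Texp_def
    by (subst integrable_density[OF _ _ nn]) (auto simp: erl_ln lnexp_lborel)
  show "(\<integral>x. ln x \<partial>Texp) = - gam" unfolding Texp_def
    by (subst integral_density[OF _ _ nn]) (auto simp: erl_ln lnexp_lborel)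
qed

lemma real_distribution_Texp: "real_distribution Texp"
  unfolding real_distribution_def real_distribution_axioms_def Texp_def
  using prob_space_exponential_density[of 1] by simp

lemma real_distribution_gumbel: "real_distribution gumbel"
  unfolding real_distribution_def real_distribution_axioms_def
  using prob_space_gumbel by simp

definition phi :: "real \<Rightarrow> real" where "phi x = exp (-(x + gam))"

lemma phi_meas[measurable]: "phi \<in> borel_measurable borel"
  unfolding phi_def[abs_def] by measurable

lemma distr_gumbel_phi: "distr gumbel borel phi = Texp"
proof (rule cdf_unique)
  show "real_distribution (distr gumbel borel phi)"
    by (intro G.real_distribution_distr) simp
  show "real_distribution Texp" by (rule real_distribution_Texp)
  show "cdf (distr gumbel borel phi) = cdf Texp"
  proof
    fix t :: real
    have "cdf (distr gumbel borel phi) t = measure gumbel (phi -` {..t})"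
      unfolding cdf_def2 by (subst measure_distr) auto
    also have "\<dots> = (if 0 \<le> t then 1 - exp (- t) else 0)"
    proof (cases "t > 0")
      case True
      have "phi x \<le> t \<longleftrightarrow> x \<notin> {..< - ln t - gam}" for x
      proof -
        have "phi x \<le> t \<longleftrightarrow> exp (-(x + gam)) \<le> exp (ln t)" using True by (simp add: phi_def)
        also have "\<dots> \<longleftrightarrow> -(x + gam) \<le> ln t" by (rule exp_le_cancel_iff)
        finally show ?thesis by auto
      qed
      hence "phi -` {..t} = UNIV - {..< - ln t - gam}" by auto
      hence "measure gumbel (phi -` {..t}) = 1 - Fg (- ln t - gam)"
        using G.prob_compl[of "{..< - ln t - gam}"] measure_gumbel_lessThan by simp
      thus ?thesis using True by (simp add: Fg_def)
    next
      case False
      have "phi -` {..t} = {}" using False by (auto simp: phi_def) (smt (verit) exp_gt_zero)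
      thus ?thesis using False by auto
    qed
    also have "\<dots> = cdf Texp t"
      unfolding cdf_def2 Texp_def measure_def
      by (simp add: emeasure_erlang_density erlang_CDF_0)
    finally show "cdf (distr gumbel borel phi) t = cdf Texp t" .
  qed
qed

lemma gumbel_mean: "integrable gumbel (\<lambda>x. x)" "(\<integral>x. x \<partial>gumbel) = 0"
proof -
  have lp: "ln (phi x) = - x - gam" for x by (simp add: phi_def)
  have i: "integrable gumbel (\<lambda>x. - x - gam)"
    using Texp_ln(1) unfolding distr_gumbel_phi[symmetric]
    by (subst (asm) integrable_distr_eq) (auto simp: lp)
  have v: "(\<integral>x. - x - gam \<partial>gumbel) = - gam"
    using Texp_ln(2) unfolding distr_gumbel_phi[symmetric]
    by (subst (asm) integral_distr) (auto simp: lp)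
  have "integrable gumbel (\<lambda>x. - ((- x - gam) + gam))"
    by (intro integrable_minus Bochner_Integration.integrable_add i) simp
  thus "integrable gumbel (\<lambda>x. x)" by simp
  have "(\<integral>x. - x - gam \<partial>gumbel) = - (\<integral>x. x \<partial>gumbel) - gam"
    using \<open>integrable gumbel (\<lambda>x. x)\<close> by (simp add: Bochner_Integration.integral_diff G.prob_space[unfolded space_gumbel])
  thus "(\<integral>x. x \<partial>gumbel) = 0" using v by simp
qed


definition Mx :: "real \<Rightarrow> real \<times> real \<times> real \<Rightarrow> real" where
  "Mx V e = max (fst e) (max (V + fst (snd e)) (V + snd (snd e)))"

lemma Mx_meas[measurable]: "Mx V \<in> borel_measurable noise3"
  unfolding Mx_def[abs_def] by measurable

lemma Fg_shift: "Fg x * (Fg (x - V) * Fg (x - V)) = Fg (x - ln (1 + 2 * exp V))"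
proof -
  have p: "1 + 2 * exp V > 0" by (simp add: add_pos_pos)
  have "exp (-(x - V + gam)) = exp V * exp (-(x + gam))" by (simp add: exp_add[symmetric])
  moreover have "exp (-(x - ln (1 + 2 * exp V) + gam)) = (1 + 2 * exp V) * exp (-(x + gam))"
    using p by (simp add: exp_add[symmetric] exp_diff exp_minus field_simps)
  ultimately show ?thesis unfolding Fg_def by (simp add: exp_add[symmetric] algebra_simps)
qed

lemma distr_Mx: "distr noise3 borel (Mx V) = distr gumbel borel (\<lambda>x. x + ln (1 + 2 * exp V))"
proof (rule cdf_unique)
  show "real_distribution (distr noise3 borel (Mx V))"
    by (intro N3.real_distribution_distr) simp
  show "real_distribution (distr gumbel borel (\<lambda>x. x + ln (1 + 2 * exp V)))"
    by (intro G.real_distribution_distr) simp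
  show "cdf (distr noise3 borel (Mx V)) = cdf (distr gumbel borel (\<lambda>x. x + ln (1 + 2 * exp V)))"
  proof
    fix x :: real
    have "cdf (distr noise3 borel (Mx V)) x = measure noise3 (Mx V -` {..x} \<inter> space noise3)"
      unfolding cdf_def2 by (subst measure_distr) auto
    also have "Mx V -` {..x} \<inter> space noise3 = {..x} \<times> ({..x - V} \<times> {..x - V})"
      by (auto simp: Mx_def space_noise3)
    also have "measure noise3 \<dots> = Fg x * (Fg (x - V) * Fg (x - V))"
    proof -
      have "emeasure noise3 ({..x} \<times> ({..x - V} \<times> {..x - V}))
          = emeasure gumbel {..x} * (emeasure gumbel {..x - V} * emeasure gumbel {..x - V})"
        unfolding noise3_def
        by (simp add: GG.emeasure_pair_measure_Times G.emeasure_pair_measure_Times)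
      thus ?thesis unfolding measure_def
        by (simp add: emeasure_gumbel_atMost ennreal_mult[symmetric] Fg_def)
    qed
    also have "\<dots> = Fg (x - ln (1 + 2 * exp V))" by (rule Fg_shift)
    also have "\<dots> = measure gumbel ((\<lambda>y. y + ln (1 + 2 * exp V)) -` {..x} \<inter> space gumbel)"
    proof -
      have "(\<lambda>y. y + ln (1 + 2 * exp V)) -` {..x} \<inter> space gumbel = {..x - ln (1 + 2 * exp V)}"
        by auto
      thus ?thesis by (simp add: measure_gumbel_atMost)
    qed
    also have "\<dots> = cdf (distr gumbel borel (\<lambda>x. x + ln (1 + 2 * exp V))) x"
      unfolding cdf_def2 by (subst measure_distr) auto
    finally show "cdf (distr noise3 borel (Mx V)) x = cdf (distr gumbel borel (\<lambda>x. x + ln (1 + 2 * exp V))) x" .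
  qed
qed

lemma exp_max_util_PP: "exp_max_util VP vN PP = ln (1 + 2 * exp VP)"
proof -
  have "exp_max_util VP vN PP = (\<integral>e. Mx VP e \<partial>noise3)"
    unfolding exp_max_util_def Mx_def u_out_def u_1_def u_2_def by simp
  also have "\<dots> = (\<integral>y. y \<partial>distr noise3 borel (Mx VP))"
    by (subst integral_distr) auto
  also have "\<dots> = (\<integral>y. y \<partial>distr gumbel borel (\<lambda>x. x + ln (1 + 2 * exp VP)))"
    by (simp add: distr_Mx)
  also have "\<dots> = (\<integral>x. x + ln (1 + 2 * exp VP) \<partial>gumbel)"
    by (subst integral_distr) auto
  also have "\<dots> = (\<integral>x. x \<partial>gumbel) + ln (1 + 2 * exp VP)"
    using gumbel_mean(1) by (simp add: Bochner_Integration.integral_add G.prob_space[unfolded space_gumbel])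
  also have "\<dots> = ln (1 + 2 * exp VP)" by (simp add: gumbel_mean(2))
  finally show ?thesis .
qed


lemma finite_histories: "finite (histories t)"
  unfolding histories_def
  by (rule finite_lists_length_eq) (simp add: all_steps_def all_actions_def)

lemma histories_0: "histories 0 = {[]}"
  by (auto simp: histories_def)

lemma histories_Suc: "histories (Suc t) = (\<lambda>(h, s). h @ [s]) ` (histories t \<times> all_steps)"
proof (intro set_eqI iffI)
  fix x assume "x \<in> histories (Suc t)"
  hence x: "set x \<subseteq> all_steps" "length x = Suc t" by (auto simp: histories_def)
  then obtain h s where "x = h @ [s]" by (metis length_Suc_conv_rev)
  thus "x \<in> (\<lambda>(h, s). h @ [s]) ` (histories t \<times> all_steps)"
    using x by (auto simp: histories_def intro!: image_eqI[of _ _ "(h, s)"])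
qed (auto simp: histories_def)

lemma sum_histories_Suc:
  "(\<Sum>h\<in>histories (Suc t). f h) = (\<Sum>h\<in>histories t. \<Sum>s\<in>all_steps. f (h @ [s]))"
proof -
  have inj: "inj_on (\<lambda>(h, s). h @ [s]) (histories t \<times> all_steps)"
    by (auto simp: inj_on_def)
  have "(\<Sum>h\<in>histories (Suc t). f h) = (\<Sum>p\<in>histories t \<times> all_steps. f ((\<lambda>(h, s). h @ [s]) p))"
    unfolding histories_Suc by (rule sum.reindex[OF inj, unfolded comp_def])
  also have "\<dots> = (\<Sum>h\<in>histories t. \<Sum>s\<in>all_steps. f (h @ [s]))"
    unfolding sum.cartesian_product by (simp add: split_def)
  finally show ?thesis .
qed

lemma sum_all_steps:
  "(\<Sum>s\<in>all_steps. f s) = (\<Sum>a\<in>all_actions. f (a, Out) + f (a, First) + f (a, Second))"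
proof -
  have "(\<Sum>s\<in>all_steps. f s) = (\<Sum>a\<in>all_actions. \<Sum>c\<in>{Out, First, Second}. f (a, c))"
    unfolding all_steps_def sum.cartesian_product by (simp add: split_def)
  thus ?thesis by (simp add: add.assoc)
qed

lemma sum_all_actions: "(\<Sum>a\<in>all_actions. g a) = g PP + g PN + g NN"
  by (simp add: all_actions_def add.assoc)

lemma pmf_sum_actions: "pmf q PP + pmf q PN + pmf q NN = 1"
proof -
  have "(\<Sum>a\<in>all_actions. pmf q a) = 1"
    by (rule sum_pmf_eq_1) (auto simp: all_actions_def intro: action.exhaust)
  thus ?thesis by (simp add: sum_all_actions)
qed

lemma hist_prob_snoc:
  "hist_prob VP pol vN (h @ [s]) = hist_prob VP pol vN h * (pmf (pol h) (fst s) * outcome_prob VP vN (fst s) (snd s))"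
proof -
  have "hist_prob VP pol vN (h @ [s]) =
     (\<Prod>i<Suc (length h). pmf (pol (take i (h @ [s]))) (fst ((h @ [s]) ! i)) * outcome_prob VP vN (fst ((h @ [s]) ! i)) (snd ((h @ [s]) ! i)))"
    by (simp add: hist_prob_def)
  also have "\<dots> = (\<Prod>i<length h. pmf (pol (take i (h @ [s]))) (fst ((h @ [s]) ! i)) * outcome_prob VP vN (fst ((h @ [s]) ! i)) (snd ((h @ [s]) ! i)))
        * (pmf (pol h) (fst s) * outcome_prob VP vN (fst s) (snd s))"
    by (simp add: prod.lessThan_Suc)
  also have "(\<Prod>i<length h. pmf (pol (take i (h @ [s]))) (fst ((h @ [s]) ! i)) * outcome_prob VP vN (fst ((h @ [s]) ! i)) (snd ((h @ [s]) ! i)))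
      = hist_prob VP pol vN h"
    unfolding hist_prob_def by (intro prod.cong) (auto simp: nth_append)
  finally show ?thesis .
qed

lemma hist_prob_nonneg: "0 \<le> hist_prob VP pol vN h"
  unfolding hist_prob_def by (intro prod_nonneg) (auto simp: outcome_prob_nonneg)

lemma step_sum: "(\<Sum>s\<in>all_steps. pmf (pol h) (fst s) * outcome_prob VP vN (fst s) (snd s)) = 1"
proof -
  have o: "outcome_prob VP vN a Out + outcome_prob VP vN a First + outcome_prob VP vN a Second = 1" for a
    using outcome_sum[of VP vN a] by simp
  have "(\<Sum>s\<in>all_steps. pmf (pol h) (fst s) * outcome_prob VP vN (fst s) (snd s))
     = (\<Sum>a\<in>all_actions. pmf (pol h) a * (outcome_prob VP vN a Out + outcome_prob VP vN a First + outcome_prob VP vN a Second))"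
    unfolding sum_all_steps by (simp add: algebra_simps)
  also have "\<dots> = 1" by (simp add: o sum_all_actions pmf_sum_actions)
  finally show ?thesis .
qed

lemma hist_prob_total: "(\<Sum>h\<in>histories t. hist_prob VP pol vN h) = 1"
proof (induction t)
  case 0 thus ?case by (simp add: histories_0 hist_prob_def)
next
  case (Suc t)
  have "(\<Sum>h\<in>histories (Suc t). hist_prob VP pol vN h)
      = (\<Sum>h\<in>histories t. hist_prob VP pol vN h * (\<Sum>s\<in>all_steps. pmf (pol h) (fst s) * outcome_prob VP vN (fst s) (snd s)))"
    unfolding sum_histories_Suc hist_prob_snoc by (simp add: sum_distrib_left)
  also have "\<dots> = 1" using Suc by (simp add: step_sum)
  finally show ?case .
qed


definition allPP :: "history \<Rightarrow> bool" where "allPP h = (\<forall>s\<in>set h. fst s = PP)"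

definition ind :: "history \<Rightarrow> real" where "ind h = (if allPP h then 1 else 0)"

lemma hist_prob_allPP:
  assumes "allPP h"
  shows "hist_prob VP pol vN h = hist_prob VP pol vN' h"
  unfolding hist_prob_def
proof (intro prod.cong refl)
  fix i assume "i \<in> {..<length h}"
  hence "h ! i \<in> set h" by simp
  hence "fst (h ! i) = PP" using assms by (auto simp: allPP_def)
  thus "pmf (pol (take i h)) (fst (h ! i)) * outcome_prob VP vN (fst (h ! i)) (snd (h ! i)) =
        pmf (pol (take i h)) (fst (h ! i)) * outcome_prob VP vN' (fst (h ! i)) (snd (h ! i))"
    using outcome_prob_PP by metis
qed

lemma hist_ind: "hist_prob VP pol vN h * ind h = hist_prob VP pol vN' h * ind h"
  using hist_prob_allPP[of h VP pol vN vN'] by (auto simp: ind_def)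

definition W :: "real \<Rightarrow> policy \<Rightarrow> real \<Rightarrow> nat \<Rightarrow> real" where
  "W VP pol vN t = (\<Sum>h\<in>histories t. hist_prob VP pol vN h * ind h)"

lemma W_indep: "W VP pol vN t = W VP pol vN' t"
  unfolding W_def using hist_ind by metis

lemma W_0: "W VP pol vN 0 = 1"
  by (simp add: W_def histories_0 hist_prob_def ind_def allPP_def)

lemma W_nonneg: "0 \<le> W VP pol vN t"
  unfolding W_def by (intro sum_nonneg mult_nonneg_nonneg hist_prob_nonneg) (auto simp: ind_def)

lemma W_le1: "W VP pol vN t \<le> 1"
proof -
  have "W VP pol vN t \<le> (\<Sum>h\<in>histories t. hist_prob VP pol vN h)"
    unfolding W_def by (intro sum_mono) (auto simp: ind_def hist_prob_nonneg)
  thus ?thesis by (simp add: hist_prob_total)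
qed

lemma ind_snoc: "ind (h @ [s]) = ind h * (if fst s = PP then 1 else 0)"
  by (auto simp: ind_def allPP_def)

lemma W_Suc: "W VP pol vN (Suc t) = (\<Sum>h\<in>histories t. hist_prob VP pol vN h * ind h * pmf (pol h) PP)"
proof -
  have o: "outcome_prob VP vN a Out + outcome_prob VP vN a First + outcome_prob VP vN a Second = 1" for a
    using outcome_sum[of VP vN a] by simp
  have "W VP pol vN (Suc t) = (\<Sum>h\<in>histories t. hist_prob VP pol vN h * ind h *
      (\<Sum>s\<in>all_steps. pmf (pol h) (fst s) * outcome_prob VP vN (fst s) (snd s) * (if fst s = PP then 1 else 0)))"
    unfolding W_def sum_histories_Suc hist_prob_snoc ind_snoc
    by (simp add: sum_distrib_left algebra_simps)
  also have "\<dots> = (\<Sum>h\<in>histories t. hist_prob VP pol vN h * ind h * pmf (pol h) PP)"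
  proof (intro sum.cong refl)
    fix h
    have "(\<Sum>s\<in>all_steps. pmf (pol h) (fst s) * outcome_prob VP vN (fst s) (snd s) * (if fst s = PP then 1 else 0))
       = pmf (pol h) PP * (outcome_prob VP vN PP Out + outcome_prob VP vN PP First + outcome_prob VP vN PP Second)"
      unfolding sum_all_steps sum_all_actions by (simp add: algebra_simps)
    thus "hist_prob VP pol vN h * ind h *
      (\<Sum>s\<in>all_steps. pmf (pol h) (fst s) * outcome_prob VP vN (fst s) (snd s) * (if fst s = PP then 1 else 0))
      = hist_prob VP pol vN h * ind h * pmf (pol h) PP" by (simp add: o)
  qed
  finally show ?thesis .
qed


definition E0 :: "real \<Rightarrow> real" where "E0 VP = 2 * exp VP / (1 + 2 * exp VP)"

lemma eng_PP: "engage_prob VP vN PP = E0 VP"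
  by (simp add: engage_prob_formula E0_def)

lemma eng_nonneg: "0 \<le> engage_prob VP vN a"
  by (simp add: engage_prob_def)

lemma eng_le1: "engage_prob VP vN a \<le> 1"
  unfolding engage_prob_def by (rule N3.prob_le_1)

lemma frac_mono:
  fixes s1 s2 :: real
  assumes "0 \<le> s1" "s1 \<le> s2"
  shows "s1 / (1 + s1) \<le> s2 / (1 + s2)"
  using assms by (simp add: field_simps)

lemma frac_strict:
  fixes s1 s2 :: real
  assumes "0 \<le> s1" "s1 < s2"
  shows "s1 / (1 + s1) < s2 / (1 + s2)"
  using assms by (simp add: field_simps)

definition cgap :: "real \<Rightarrow> real" where "cgap VP = E0 VP - engage_prob VP vN_low PN"

lemma cgap_pos:
  assumes "VP \<ge> 0"
  shows "cgap VP > 0"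
proof -
  have "exp (-1::real) < exp VP" using assms by simp
  hence "engage_prob VP vN_low PN < E0 VP"
    unfolding engage_prob_formula E0_def vN_low_def
    using frac_strict[of "exp VP + exp (-1)" "exp VP + exp VP"] by simp
  thus ?thesis by (simp add: cgap_def)
qed

lemma eng_low_NN:
  assumes "VP \<ge> 0"
  shows "engage_prob VP vN_low NN \<le> engage_prob VP vN_low PN"
proof -
  have "exp (-1::real) \<le> exp VP" using assms by simp
  thus ?thesis unfolding engage_prob_formula vN_low_def
    using frac_mono[of "exp (-1) + exp (-1)" "exp VP + exp (-1)"] by simp
qed

abbreviation Q :: "real \<Rightarrow> policy \<Rightarrow> real \<Rightarrow> history \<Rightarrow> real" where
  "Q VP pol vN h \<equiv> (\<Sum>a\<in>all_actions. pmf (pol h) a * engage_prob VP vN a)"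

lemma Q_low:
  assumes "VP \<ge> 0"
  shows "Q VP pol vN_low h \<le> E0 VP - cgap VP * ind h * (1 - pmf (pol h) PP)"
proof -
  let ?a = "pmf (pol h) PP" and ?b = "pmf (pol h) PN" and ?c = "pmf (pol h) NN"
  have s: "?a + ?b + ?c = 1" by (rule pmf_sum_actions)
  have "Q VP pol vN_low h = ?a * E0 VP + ?b * engage_prob VP vN_low PN + ?c * engage_prob VP vN_low NN"
    by (simp add: sum_all_actions eng_PP)
  also have "\<dots> \<le> ?a * E0 VP + ?b * engage_prob VP vN_low PN + ?c * engage_prob VP vN_low PN"
    using eng_low_NN[OF assms] by (intro add_left_mono mult_left_mono) auto
  also have "\<dots> = E0 VP - cgap VP * (1 - ?a)"
  proof -
    have c: "?c = 1 - ?a - ?b" using s by simp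
    show ?thesis unfolding cgap_def c by (simp add: algebra_simps)
  qed
  also have "\<dots> \<le> E0 VP - cgap VP * ind h * (1 - ?a)"
  proof -
    have "0 \<le> cgap VP * (1 - ?a)" using cgap_pos[OF assms] pmf_le_1[of "pol h" PP]
      by (intro mult_nonneg_nonneg) auto
    thus ?thesis by (auto simp: ind_def)
  qed
  finally show ?thesis .
qed

lemma Q_high:
  "Q VP pol vN h \<le> E0 VP + (1 - E0 VP) * (1 - ind h * pmf (pol h) PP)"
proof -
  let ?a = "pmf (pol h) PP" and ?b = "pmf (pol h) PN" and ?c = "pmf (pol h) NN"
  have s: "?a + ?b + ?c = 1" by (rule pmf_sum_actions)
  have "Q VP pol vN h = ?a * E0 VP + ?b * engage_prob VP vN PN + ?c * engage_prob VP vN NN"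
    by (simp add: sum_all_actions eng_PP)
  also have "\<dots> \<le> ?a * E0 VP + ?b * 1 + ?c * 1"
    using eng_le1 by (intro add_mono mult_left_mono) auto
  also have "\<dots> = E0 VP + (1 - E0 VP) * (1 - ?a)" using s by (simp add: algebra_simps)
  also have "\<dots> \<le> E0 VP + (1 - E0 VP) * (1 - ind h * ?a)"
  proof -
    have "0 < 1 + 2 * exp VP" by (simp add: add_pos_pos)
    hence "E0 VP \<le> 1" unfolding E0_def by simp
    moreover have "0 \<le> ?a" by simp
    moreover have "(1 - E0 VP) * (1 - ?a) \<le> (1 - E0 VP) * 1"
      using \<open>E0 VP \<le> 1\<close> \<open>0 \<le> ?a\<close> by (intro mult_left_mono) auto
    ultimately show ?thesis by (auto simp: ind_def mult_nonneg_nonneg)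
  qed
  finally show ?thesis .
qed

lemma Q_nonneg: "0 \<le> Q VP pol vN h"
  by (intro sum_nonneg mult_nonneg_nonneg eng_nonneg) auto

lemma Q_le1: "Q VP pol vN h \<le> 1"
proof -
  have "Q VP pol vN h \<le> (\<Sum>a\<in>all_actions. pmf (pol h) a * 1)"
    by (intro sum_mono mult_left_mono eng_le1) auto
  thus ?thesis using pmf_sum_actions[of "pol h"] by (simp add: sum_all_actions)
qed

abbreviation CE :: "real \<Rightarrow> policy \<Rightarrow> nat \<Rightarrow> real \<Rightarrow> real" where
  "CE VP pol t vN \<equiv> cond_expect VP pol t (\<lambda>a vN. engage_prob VP vN a) vN"

lemma CE_bounds: "0 \<le> CE VP pol t vN" "CE VP pol t vN \<le> 1"
proof -
  show "0 \<le> CE VP pol t vN" unfolding cond_expect_def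
    by (intro sum_nonneg mult_nonneg_nonneg hist_prob_nonneg Q_nonneg)
  have "CE VP pol t vN \<le> (\<Sum>h\<in>histories t. hist_prob VP pol vN h * 1)"
    unfolding cond_expect_def by (intro sum_mono mult_left_mono Q_le1 hist_prob_nonneg)
  thus "CE VP pol t vN \<le> 1" by (simp add: hist_prob_total)
qed

lemma CE_low:
  assumes "VP \<ge> 0"
  shows "CE VP pol t vN_low \<le> E0 VP - cgap VP * (W VP pol vN_low t - W VP pol vN_low (Suc t))"
proof -
  let ?hp = "hist_prob VP pol vN_low"
  have "CE VP pol t vN_low \<le> (\<Sum>h\<in>histories t. ?hp h * (E0 VP - cgap VP * ind h * (1 - pmf (pol h) PP)))"
    unfolding cond_expect_def by (intro sum_mono mult_left_mono Q_low assms hist_prob_nonneg)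
  also have "\<dots> = (\<Sum>h\<in>histories t. E0 VP * ?hp h - cgap VP * (?hp h * ind h - ?hp h * ind h * pmf (pol h) PP))"
    by (intro sum.cong refl) (simp add: algebra_simps)
  also have "\<dots> = E0 VP * (\<Sum>h\<in>histories t. ?hp h) - cgap VP * ((\<Sum>h\<in>histories t. ?hp h * ind h) - (\<Sum>h\<in>histories t. ?hp h * ind h * pmf (pol h) PP))"
    by (simp add: sum_distrib_left[symmetric] sum_subtractf)
  also have "\<dots> = E0 VP - cgap VP * (W VP pol vN_low t - W VP pol vN_low (Suc t))"
    by (simp only: W_Suc) (simp add: hist_prob_total W_def)
  finally show ?thesis .
qed

lemma CE_high:
  "CE VP pol t vN \<le> E0 VP + (1 - E0 VP) * (1 - W VP pol vN (Suc t))"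
proof -
  let ?hp = "hist_prob VP pol vN"
  have "CE VP pol t vN \<le> (\<Sum>h\<in>histories t. ?hp h * (E0 VP + (1 - E0 VP) * (1 - ind h * pmf (pol h) PP)))"
    unfolding cond_expect_def by (intro sum_mono mult_left_mono Q_high hist_prob_nonneg)
  also have "\<dots> = (\<Sum>h\<in>histories t. ?hp h - (1 - E0 VP) * (?hp h * ind h * pmf (pol h) PP))"
    by (intro sum.cong refl) (simp add: algebra_simps)
  also have "\<dots> = (\<Sum>h\<in>histories t. ?hp h) - (1 - E0 VP) * (\<Sum>h\<in>histories t. ?hp h * ind h * pmf (pol h) PP)"
    by (simp add: sum_subtractf sum_distrib_left)
  also have "\<dots> = E0 VP + (1 - E0 VP) * (1 - W VP pol vN (Suc t))"
    by (simp add: hist_prob_total W_Suc algebra_simps)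
  finally show ?thesis .
qed


lemma step_bound:
  fixes pol :: policy and t :: nat
  assumes VP: "VP \<ge> 0" and p: "0 < p" "p < 1"
  defines "x \<equiv> \<lambda>t. 1 - W VP pol vN_low t"
  shows "step_expect VP p pol t (\<lambda>a vN. engage_prob VP vN a)
     \<le> E0 VP + p * (1 - E0 VP) * x (Suc t) - (1 - p) * cgap VP * (x (Suc t) - x t)"
proof -
  have h: "CE VP pol t (vN_high p) \<le> E0 VP + (1 - E0 VP) * x (Suc t)"
    using CE_high[of VP pol t "vN_high p"] W_indep[of VP pol "vN_high p" "Suc t" vN_low]
    unfolding x_def by simp
  have l: "CE VP pol t vN_low \<le> E0 VP - cgap VP * (x (Suc t) - x t)"
    using CE_low[OF VP, of pol t] unfolding x_def by simp
  have "step_expect VP p pol t (\<lambda>a vN. engage_prob VP vN a)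
      = p * CE VP pol t (vN_high p) + (1 - p) * CE VP pol t vN_low"
    by (simp add: step_expect_def)
  also have "\<dots> \<le> p * (E0 VP + (1 - E0 VP) * x (Suc t)) + (1 - p) * (E0 VP - cgap VP * (x (Suc t) - x t))"
    using h l p by (intro add_mono mult_left_mono) auto
  also have "\<dots> = E0 VP + p * (1 - E0 VP) * x (Suc t) - (1 - p) * cgap VP * (x (Suc t) - x t)"
    by (simp add: algebra_simps)
  finally show ?thesis .
qed

lemma step_01:
  assumes p: "0 \<le> p" "p \<le> 1"
  shows "0 \<le> step_expect VP p pol t (\<lambda>a vN. engage_prob VP vN a)"
        "step_expect VP p pol t (\<lambda>a vN. engage_prob VP vN a) \<le> 1"
proof -
  have a: "0 \<le> CE VP pol t v" "CE VP pol t v \<le> 1" for v using CE_bounds by auto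
  show "0 \<le> step_expect VP p pol t (\<lambda>a vN. engage_prob VP vN a)"
    unfolding step_expect_def using a p by (intro add_nonneg_nonneg mult_nonneg_nonneg) auto
  have "step_expect VP p pol t (\<lambda>a vN. engage_prob VP vN a) \<le> p * 1 + (1 - p) * 1"
    unfolding step_expect_def using a p by (intro add_mono mult_left_mono) auto
  thus "step_expect VP p pol t (\<lambda>a vN. engage_prob VP vN a) \<le> 1" by simp
qed

lemma summable_bounded_geom:
  fixes \<delta> :: real
  assumes "0 \<le> \<delta>" "\<delta> < 1" "\<And>t. \<bar>f t\<bar> \<le> 1"
  shows "summable (\<lambda>t. \<delta> ^ t * f t)"
proof (rule summable_comparison_test[OF _ summable_geometric[of \<delta>]])
  show "\<exists>N. \<forall>n\<ge>N. norm (\<delta> ^ n * f n) \<le> \<delta> ^ n"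
    using assms by (auto simp: abs_mult intro!: mult_left_le)
qed (use assms in auto)

lemma Eng_bound:
  assumes VP: "VP \<ge> 0" and p: "0 < p" "p < 1" and d: "0 \<le> \<delta>" "\<delta> < 1"
    and cond: "p * (1 - E0 VP) \<le> (1 - p) * cgap VP * (1 - \<delta>)"
  shows "Eng VP \<delta> p pol \<le> E0 VP / (1 - \<delta>)"
proof -
  define x where "x = (\<lambda>t. 1 - W VP pol vN_low t)"
  define a where "a = p * (1 - E0 VP)"
  define b where "b = (1 - p) * cgap VP"
  define st where "st = (\<lambda>t. step_expect VP p pol t (\<lambda>a vN. engage_prob VP vN a))"
  have x01: "\<bar>x t\<bar> \<le> 1" "0 \<le> x t" for t
    unfolding x_def using W_nonneg[of VP pol vN_low t] W_le1[of VP pol vN_low t] by auto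
  have x0: "x 0 = 0" unfolding x_def by (simp add: W_0)
  have sst: "summable (\<lambda>t. \<delta> ^ t * st t)"
    using step_01[of p VP pol] p by (intro summable_bounded_geom d) (auto simp: st_def)
  have sS: "summable (\<lambda>t. \<delta> ^ t * x (Suc t))"
    using x01 by (intro summable_bounded_geom d) auto
  define S where "S = (\<Sum>t. \<delta> ^ t * x (Suc t))"
  have S0: "0 \<le> S" unfolding S_def using x01 d by (intro suminf_nonneg sS mult_nonneg_nonneg) auto
  have s1: "(\<lambda>t. \<delta> ^ t * x (Suc t)) sums S" using sS unfolding S_def by (rule summable_sums)
  have "(\<lambda>t. \<delta> ^ Suc t * x (Suc t)) sums (\<delta> * S)"
    using sums_mult[OF s1, of \<delta>] by (simp add: algebra_simps)
  hence s2: "(\<lambda>t. \<delta> ^ t * x t) sums (\<delta> * S)"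
    using sums_Suc_iff[of "\<lambda>t. \<delta> ^ t * x t" "\<delta> * S"] x0 by simp
  have g: "(\<lambda>t. \<delta> ^ t) sums (1 / (1 - \<delta>))" using d by (intro geometric_sums) auto
  define B where "B = (\<lambda>t. E0 VP + a * x (Suc t) - b * (x (Suc t) - x t))"
  have "(\<lambda>t. E0 VP * \<delta> ^ t + (a - b) * (\<delta> ^ t * x (Suc t)) + b * (\<delta> ^ t * x t))
      sums (E0 VP * (1 / (1 - \<delta>)) + (a - b) * S + b * (\<delta> * S))"
    by (intro sums_add sums_mult g s1 s2)
  moreover have "(\<lambda>t. E0 VP * \<delta> ^ t + (a - b) * (\<delta> ^ t * x (Suc t)) + b * (\<delta> ^ t * x t)) = (\<lambda>t. \<delta> ^ t * B t)"
    by (auto simp: B_def algebra_simps)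
  ultimately have sB: "(\<lambda>t. \<delta> ^ t * B t) sums (E0 VP / (1 - \<delta>) + (a - b * (1 - \<delta>)) * S)"
    by (simp add: algebra_simps)
  have "Eng VP \<delta> p pol = (\<Sum>t. \<delta> ^ t * st t)" by (simp add: Eng_def st_def)
  also have "\<dots> \<le> (\<Sum>t. \<delta> ^ t * B t)"
  proof (rule suminf_le)
    show "\<delta> ^ t * st t \<le> \<delta> ^ t * B t" for t
      using step_bound[OF VP p, of pol t] d unfolding st_def B_def x_def a_def b_def
      by (intro mult_left_mono) (auto simp: algebra_simps)
  qed (use sst sB in \<open>auto simp: sums_iff\<close>)
  also have "\<dots> = E0 VP / (1 - \<delta>) + (a - b * (1 - \<delta>)) * S" using sB by (simp add: sums_iff)
  also have "\<dots> \<le> E0 VP / (1 - \<delta>)"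
  proof -
    have "(a - b * (1 - \<delta>)) * S \<le> 0" using cond S0 unfolding a_def b_def
      by (intro mult_nonpos_nonneg) (auto simp: algebra_simps)
    thus ?thesis by simp
  qed
  finally show ?thesis .
qed

lemma cond_expect_APP: "cond_expect VP APP t g vN = g PP vN"
proof -
  have "cond_expect VP APP t g vN = (\<Sum>h\<in>histories t. hist_prob VP APP vN h * g PP vN)"
    unfolding cond_expect_def by (intro sum.cong refl) (simp add: APP_def sum_all_actions)
  also have "\<dots> = g PP vN" by (simp add: sum_distrib_right[symmetric] hist_prob_total)
  finally show ?thesis .
qed

lemma Eng_APP:
  assumes d: "0 \<le> \<delta>" "\<delta> < 1"
  shows "Eng VP \<delta> p APP = E0 VP / (1 - \<delta>)"
proof -
  have "(\<lambda>t. \<delta> ^ t) sums (1 / (1 - \<delta>))" using d by (intro geometric_sums) auto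
  hence "(\<lambda>t. \<delta> ^ t * E0 VP) sums (1 / (1 - \<delta>) * E0 VP)" by (rule sums_mult2)
  moreover have "step_expect VP p APP t (\<lambda>a vN. engage_prob VP vN a) = E0 VP" for t
    by (simp add: step_expect_def cond_expect_APP eng_PP algebra_simps)
  ultimately show ?thesis unfolding Eng_def by (simp add: sums_iff)
qed

lemma Util_APP:
  assumes d: "0 \<le> \<delta>" "\<delta> < 1"
  shows "Util VP \<delta> p APP = 1 / (1 - \<delta>) * ln (1 + 2 * exp VP)"
proof -
  have "(\<lambda>t. \<delta> ^ t) sums (1 / (1 - \<delta>))" using d by (intro geometric_sums) auto
  hence "(\<lambda>t. \<delta> ^ t * ln (1 + 2 * exp VP)) sums (1 / (1 - \<delta>) * ln (1 + 2 * exp VP))" by (rule sums_mult2)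
  moreover have "step_expect VP p APP t (\<lambda>a vN. exp_max_util VP vN a) = ln (1 + 2 * exp VP)" for t
    by (simp add: step_expect_def cond_expect_APP exp_max_util_PP algebra_simps)
  ultimately show ?thesis unfolding Util_def by (simp add: sums_iff)
qed

theorem theorem1:
  fixes VP \<delta> :: real
  assumes "VP \<ge> 0" and "0 \<le> \<delta>" and "\<delta> < 1"
  shows "(\<exists>p0. 0 < p0 \<and> p0 \<le> 1 \<and>
           (\<forall>p. 0 < p \<and> p \<le> p0 \<and> p < 1 \<longrightarrow>
              (\<forall>pol. Eng VP \<delta> p pol \<le> Eng VP \<delta> p APP)))
       \<and> (\<forall>p. 0 < p \<and> p < 1 \<longrightarrow>
              Eng VP \<delta> p APP = 1 / (1 - \<delta>) * (2 * exp VP / (1 + 2 * exp VP))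
            \<and> Util VP \<delta> p APP = 1 / (1 - \<delta>) * ln (1 + 2 * exp VP))"
proof (intro conjI allI impI)
  define c where "c = cgap VP"
  define e where "e = E0 VP"
  have c: "c > 0" unfolding c_def by (rule cgap_pos) fact
  have epos: "0 < 1 + 2 * exp VP" by (simp add: add_pos_pos)
  hence e1: "1 - e > 0" unfolding e_def E0_def by (simp add: field_simps)
  have d1: "1 - \<delta> > 0" using assms by simp
  define p0 where "p0 = c * (1 - \<delta>) / ((1 - e) + c * (1 - \<delta>))"
  have den: "(1 - e) + c * (1 - \<delta>) > 0" using c e1 d1 by (simp add: add_pos_pos)
  show "\<exists>p0. 0 < p0 \<and> p0 \<le> 1 \<and> (\<forall>p. 0 < p \<and> p \<le> p0 \<and> p < 1 \<longrightarrow> (\<forall>pol. Eng VP \<delta> p pol \<le> Eng VP \<delta> p APP))"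
  proof (intro exI[of _ p0] conjI allI impI)
    show "0 < p0" unfolding p0_def using c d1 den by simp
    show "p0 \<le> 1" unfolding p0_def using den e1 by (simp add: field_simps)
    fix p pol assume p: "0 < p \<and> p \<le> p0 \<and> p < 1"
    have "p * ((1 - e) + c * (1 - \<delta>)) \<le> c * (1 - \<delta>)"
      using p den unfolding p0_def by (simp add: field_simps)
    hence cond: "p * (1 - E0 VP) \<le> (1 - p) * cgap VP * (1 - \<delta>)"
      unfolding c_def e_def by (simp add: algebra_simps)
    have "Eng VP \<delta> p pol \<le> E0 VP / (1 - \<delta>)"
      using Eng_bound[OF assms(1) _ _ assms(2,3) cond] p by auto
    thus "Eng VP \<delta> p pol \<le> Eng VP \<delta> p APP" using Eng_APP[OF assms(2,3)] by simp
  qed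
next
  fix p :: real assume "0 < p \<and> p < 1"
  show "Eng VP \<delta> p APP = 1 / (1 - \<delta>) * (2 * exp VP / (1 + 2 * exp VP))"
    using Eng_APP[OF assms(2,3)] by (simp add: E0_def)
  show "Util VP \<delta> p APP = 1 / (1 - \<delta>) * ln (1 + 2 * exp VP)"
    using Util_APP[OF assms(2,3)] .
qed


end
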